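(* Let $\alpha_1,\alpha_2 \ge 0$, $\beta_1,\beta_2 \in [0,1]$, and let $U_1, U_2, V_1, V_2$ be random variables with $U_1, U_2$ independent and $V_1, V_2$ independent. If $V_i \preceq_{(\alpha_i, \beta_i)} U_i$ for $i \in \{1,2\}$, then $V_1 + V_2 \preceq_{(\alpha_1+\alpha_2,\, \beta_1+\beta_2)} U_1 + U_2$.
   Context: For a random variable $X$ (possibly taking values $\pm\infty$) let $\bar{F}_X(x) = 1 - F_X(x)$ be its complementary CDF. Given $\alpha \ge 0$, $\beta \in [0,1]$, we write $V \preceq_{(\alpha,\beta)} U$ ($U$ $(\alpha,\beta)$-approximately stochastically dominates $V$) if $\bar{F}_V(x) \le \bar{F}_U(x-\alpha) + \beta$ for all $x \in [-\infty,\infty]$. *)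

theory Defs
  imports "HOL-Probability.Probability"
begin

definition ecdf_rv :: "'a measure \<Rightarrow> ('a \<Rightarrow> ereal) \<Rightarrow> ereal \<Rightarrow> real" where
  "ecdf_rv M X x = measure M {\<omega> \<in> space M. X \<omega> \<le> x}"

definition ccdf_rv :: "'a measure \<Rightarrow> ('a \<Rightarrow> ereal) \<Rightarrow> ereal \<Rightarrow> real" where
  "ccdf_rv M X x = 1 - ecdf_rv M X x"

definition approx_dom ::
  "'b measure \<Rightarrow> ('b \<Rightarrow> ereal) \<Rightarrow> 'a measure \<Rightarrow> ('a \<Rightarrow> ereal) \<Rightarrow> real \<Rightarrow> real \<Rightarrow> bool" where
  "approx_dom MV V MU U \<alpha> \<beta> \<longleftrightarrow>
     (\<forall>x::ereal. ccdf_rv MV V x \<le> ccdf_rv MU U (x - ereal \<alpha>) + \<beta>)"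

end

theory Submission
  imports Defs
begin

lemma dom_inf:
  fixes P Q :: "ereal measure"
  assumes P: "prob_space P" and Q: "prob_space Q" and sP: "sets P = sets borel" and sQ: "sets Q = sets borel"
  and dom: "\<And>y. measure P {y<..} \<le> measure Q {y<..} + \<beta>"
  shows "measure P {\<infinity>} \<le> measure Q {\<infinity>} + \<beta>"
proof -
  define A where "A n = {ereal (real n)<..}" for n::nat
  have dec: "decseq A" unfolding A_def decseq_def
  proof (intro allI impI subsetI)
    fix m n :: nat and x assume "m \<le> n" "x \<in> {ereal (real n)<..}"
    then show "x \<in> {ereal (real m)<..}" 
    proof -
      have "ereal (real m) \<le> ereal (real n)" using \<open>m \<le> n\<close> by simp
      moreover have "ereal (real n) < x" using \<open>x \<in> {ereal (real n)<..}\<close> by simp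
      ultimately have "ereal (real m) < x" by (rule le_less_trans)
      then show ?thesis by simp
    qed
  qed
  interpret P: prob_space P by fact
  interpret Q: prob_space Q by fact
  have "range A \<subseteq> sets borel" unfolding A_def by auto
  then have sets: "range A \<subseteq> sets P" "range A \<subseteq> sets Q" unfolding sP sQ by auto
  have int: "(\<Inter>n. A n) = {\<infinity>}"
  proof (intro set_eqI iffI)
    fix x assume x: "x \<in> (\<Inter>n. A n)"
    show "x \<in> {\<infinity>}"
    proof (cases x)
      case (real r)
      obtain n :: nat where "r < real n" using reals_Archimedean2 by blast
      with x real show ?thesis by (auto simp: A_def dest!: spec[of _ n])
    next
      case MInf with x show ?thesis by (auto simp: A_def)
    qed simp
  qed (auto simp: A_def)
  have l1: "(\<lambda>n. measure P (A n)) \<longlonglongrightarrow> measure P {\<infinity>}"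
    using P.finite_Lim_measure_decseq[OF sets(1) dec] int by simp
  have l2: "(\<lambda>n. measure Q (A n) + \<beta>) \<longlonglongrightarrow> measure Q {\<infinity>} + \<beta>"
    using Q.finite_Lim_measure_decseq[OF sets(2) dec] int
    by (intro tendsto_add) auto
  show ?thesis
    by (rule LIMSEQ_le[OF l1 l2]) (auto simp: A_def dom)
qed

lemma dom_slice:
  fixes P Q :: "ereal measure"
  assumes P: "prob_space P" and Q: "prob_space Q" and sP: "sets P = sets borel" and sQ: "sets Q = sets borel"
  and dom: "\<And>y. measure P {y<..} \<le> measure Q {y<..} + \<beta>" and b0: "\<beta> \<ge> 0"
  shows "measure P {a. x < a + b} \<le> measure Q {a. x < a + b} + \<beta>"
proof (cases b)
  case (real r)
  have "{a. x < a + b} = {x - ereal r<..}"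
    using real by (auto simp: ereal_minus_less_iff ereal_less_minus_iff) 
  then show ?thesis using dom by simp
next
  case PInf
  show ?thesis
  proof (cases "x = \<infinity>")
    case True then show ?thesis using PInf b0 by simp
  next
    case False
    then have "{a. x < a + b} = space P" "{a. x < a + b} = space Q"
      using PInf sets_eq_imp_space_eq[OF sP] sets_eq_imp_space_eq[OF sQ] by auto
    then have "measure P {a. x < a + b} = 1" "measure Q {a. x < a + b} = 1"
      using prob_space.prob_space[OF P] prob_space.prob_space[OF Q] by simp_all
    then show ?thesis using b0 by simp
  qed
next
  case MInf
  show ?thesis
  proof (cases "x = \<infinity>")
    case True then show ?thesis using MInf b0 by simp
  next
    case False
    then have "{a. x < a + b} = {\<infinity>}"
    proof -
      have "x < a + b \<longleftrightarrow> a = \<infinity>" for a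
        using MInf False by (cases a) auto
      then show ?thesis by auto
    qed
    then show ?thesis using dom_inf[OF assms(1-5)] by simp
  qed
qed

lemma shift_iff: "((y::ereal) < u + ereal a) \<longleftrightarrow> (y - ereal a < u)"
  by (cases y; cases u) auto

lemma to_enn:
  fixes P Q :: "ereal measure"
  assumes P: "prob_space P" and Q: "prob_space Q" and b0: "\<beta> \<ge> 0"
    and h: "measure P S \<le> measure Q S + \<beta>"
  shows "emeasure P S \<le> emeasure Q S + ennreal \<beta>"
proof -
  interpret P: prob_space P by fact
  interpret Q: prob_space Q by fact
  have "emeasure P S = ennreal (measure P S)" by (simp add: P.emeasure_eq_measure)
  also have "\<dots> \<le> ennreal (measure Q S + \<beta>)" using h by (rule ennreal_leI)
  also have "\<dots> = ennreal (measure Q S) + ennreal \<beta>" using b0 by (simp add: ennreal_plus)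
  also have "ennreal (measure Q S) = emeasure Q S" by (simp add: Q.emeasure_eq_measure)
  finally show ?thesis .
qed

lemma pair_dom:
  fixes P1 Q1 P2 Q2 :: "ereal measure"
  assumes P1: "prob_space P1" and Q1: "prob_space Q1" and sP1: "sets P1 = sets borel" and sQ1: "sets Q1 = sets borel"
  and dom1: "\<And>y. measure P1 {y<..} \<le> measure Q1 {y<..} + \<beta>1" and b1: "\<beta>1 \<ge> 0"
  and P2: "prob_space P2" and Q2: "prob_space Q2" and sP2: "sets P2 = sets borel" and sQ2: "sets Q2 = sets borel"
  and dom2: "\<And>y. measure P2 {y<..} \<le> measure Q2 {y<..} + \<beta>2" and b2: "\<beta>2 \<ge> 0"
  shows "measure (P1 \<Otimes>\<^sub>M P2) {p. x < fst p + snd p} \<le> measure (Q1 \<Otimes>\<^sub>M Q2) {p. x < fst p + snd p} + \<beta>1 + \<beta>2"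
proof -
  define A where "A = {p::ereal\<times>ereal. x < fst p + snd p}"
  have Ab: "A \<in> sets (borel \<Otimes>\<^sub>M borel)"
  proof -
    have "{p \<in> space (borel \<Otimes>\<^sub>M (borel::ereal measure)). x < fst p + snd p} \<in> sets (borel \<Otimes>\<^sub>M borel)"
      by measurable
    then show ?thesis by (simp add: space_pair_measure A_def)
  qed
  have A1: "A \<in> sets (P1 \<Otimes>\<^sub>M P2)" using Ab by (simp add: sets_pair_measure_cong[OF sP1 sP2])
  have A2: "A \<in> sets (Q1 \<Otimes>\<^sub>M P2)" using Ab by (simp add: sets_pair_measure_cong[OF sQ1 sP2])
  have A3: "A \<in> sets (Q1 \<Otimes>\<^sub>M Q2)" using Ab by (simp add: sets_pair_measure_cong[OF sQ1 sQ2])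
  interpret PP: pair_prob_space P1 P2
    unfolding pair_prob_space_def pair_sigma_finite_def using P1 P2 prob_space_imp_sigma_finite by auto
  interpret QP: pair_prob_space Q1 P2
    unfolding pair_prob_space_def pair_sigma_finite_def using Q1 P2 prob_space_imp_sigma_finite by auto
  interpret QQ: pair_prob_space Q1 Q2
    unfolding pair_prob_space_def pair_sigma_finite_def using Q1 Q2 prob_space_imp_sigma_finite by auto
  have d1: "emeasure P1 {a. x < a + y} \<le> emeasure Q1 {a. x < a + y} + ennreal \<beta>1" for y
    by (rule to_enn[OF P1 Q1 b1 dom_slice[OF P1 Q1 sP1 sQ1 dom1 b1]])
  have d2: "emeasure P2 {b. x < a + b} \<le> emeasure Q2 {b. x < a + b} + ennreal \<beta>2" for a
    using to_enn[OF P2 Q2 b2 dom_slice[OF P2 Q2 sP2 sQ2 dom2 b2, of x a]] by (simp add: add.commute)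
  have s1: "(\<lambda>a. (a, y)) -` A = {a. x < a + y}" for y by (auto simp: A_def)
  have s2: "Pair a -` A = {b. x < a + b}" for a by (auto simp: A_def)
  have "emeasure (P1 \<Otimes>\<^sub>M P2) A = (\<integral>\<^sup>+y. emeasure P1 ((\<lambda>a. (a, y)) -` A) \<partial>P2)"
    by (rule PP.emeasure_pair_measure_alt2[OF A1])
  also have "\<dots> \<le> (\<integral>\<^sup>+y. emeasure Q1 ((\<lambda>a. (a, y)) -` A) + ennreal \<beta>1 \<partial>P2)"
    by (rule nn_integral_mono) (simp add: s1 d1)
  also have "\<dots> = (\<integral>\<^sup>+y. emeasure Q1 ((\<lambda>a. (a, y)) -` A) \<partial>P2) + ennreal \<beta>1"
    using QP.measurable_emeasure_Pair2[OF A2] by (simp add: nn_integral_add prob_space.emeasure_space_1[OF P2])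
  also have "(\<integral>\<^sup>+y. emeasure Q1 ((\<lambda>a. (a, y)) -` A) \<partial>P2) = emeasure (Q1 \<Otimes>\<^sub>M P2) A"
    by (rule QP.emeasure_pair_measure_alt2[OF A2, symmetric])
  finally have h1: "emeasure (P1 \<Otimes>\<^sub>M P2) A \<le> emeasure (Q1 \<Otimes>\<^sub>M P2) A + ennreal \<beta>1" .
  have "emeasure (Q1 \<Otimes>\<^sub>M P2) A = (\<integral>\<^sup>+a. emeasure P2 (Pair a -` A) \<partial>Q1)"
    by (rule sigma_finite_measure.emeasure_pair_measure_alt[OF prob_space_imp_sigma_finite[OF P2] A2])
  also have "\<dots> \<le> (\<integral>\<^sup>+a. emeasure Q2 (Pair a -` A) + ennreal \<beta>2 \<partial>Q1)"
    by (rule nn_integral_mono) (simp add: s2 d2)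
  also have "\<dots> = (\<integral>\<^sup>+a. emeasure Q2 (Pair a -` A) \<partial>Q1) + ennreal \<beta>2"
    using QQ.measurable_emeasure_Pair1[OF A3] by (simp add: nn_integral_add prob_space.emeasure_space_1[OF Q1])
  also have "(\<integral>\<^sup>+a. emeasure Q2 (Pair a -` A) \<partial>Q1) = emeasure (Q1 \<Otimes>\<^sub>M Q2) A"
    by (rule sigma_finite_measure.emeasure_pair_measure_alt[OF prob_space_imp_sigma_finite[OF Q2] A3, symmetric])
  finally have h2: "emeasure (Q1 \<Otimes>\<^sub>M P2) A \<le> emeasure (Q1 \<Otimes>\<^sub>M Q2) A + ennreal \<beta>2" .
  have "emeasure (P1 \<Otimes>\<^sub>M P2) A \<le> emeasure (Q1 \<Otimes>\<^sub>M Q2) A + ennreal \<beta>2 + ennreal \<beta>1"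
    using order_trans[OF h1 add_right_mono[OF h2]] .
  then have "ennreal (measure (P1 \<Otimes>\<^sub>M P2) A) \<le> ennreal (measure (Q1 \<Otimes>\<^sub>M Q2) A) + ennreal \<beta>1 + ennreal \<beta>2"
    by (simp add: PP.emeasure_eq_measure QQ.emeasure_eq_measure ac_simps)
  moreover have "ennreal (measure (Q1 \<Otimes>\<^sub>M Q2) A + \<beta>1 + \<beta>2) = ennreal (measure (Q1 \<Otimes>\<^sub>M Q2) A) + ennreal \<beta>1 + ennreal \<beta>2"
  proof -
    have q: "0 \<le> measure (Q1 \<Otimes>\<^sub>M Q2) A" by simp
    have "ennreal (measure (Q1 \<Otimes>\<^sub>M Q2) A + \<beta>1 + \<beta>2) = ennreal (measure (Q1 \<Otimes>\<^sub>M Q2) A + \<beta>1) + ennreal \<beta>2"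
      using q b1 b2 by (intro ennreal_plus) auto
    also have "ennreal (measure (Q1 \<Otimes>\<^sub>M Q2) A + \<beta>1) = ennreal (measure (Q1 \<Otimes>\<^sub>M Q2) A) + ennreal \<beta>1"
      using q b1 by (intro ennreal_plus) auto
    finally show ?thesis .
  qed
  ultimately have "ennreal (measure (P1 \<Otimes>\<^sub>M P2) A) \<le> ennreal (measure (Q1 \<Otimes>\<^sub>M Q2) A + \<beta>1 + \<beta>2)"
    by simp
  then have "measure (P1 \<Otimes>\<^sub>M P2) A \<le> measure (Q1 \<Otimes>\<^sub>M Q2) A + \<beta>1 + \<beta>2"
    by (rule ennreal_le_iff[THEN iffD1, rotated]) (use b1 b2 in simp)
  then show ?thesis by (simp add: A_def)
qed

lemma ccdf_eq:
  assumes P: "prob_space M" and X: "X \<in> borel_measurable M"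
  shows "ccdf_rv M X y = measure M {\<omega>\<in>space M. y < X \<omega>}"
proof -
  interpret prob_space M by fact
  have ev: "{\<omega>\<in>space M. X \<omega> \<le> y} \<in> sets M" using X by measurable
  have "{\<omega>\<in>space M. y < X \<omega>} = space M - {\<omega>\<in>space M. X \<omega> \<le> y}" by auto
  then have "measure M {\<omega>\<in>space M. y < X \<omega>} = 1 - measure M {\<omega>\<in>space M. X \<omega> \<le> y}"
    using prob_compl[OF ev] by simp
  then show ?thesis by (simp add: ccdf_rv_def ecdf_rv_def)
qed

theorem mainTheorem3:
  fixes M :: "'a measure" and N :: "'b measure"
    and U1 U2 :: "'a \<Rightarrow> ereal" and V1 V2 :: "'b \<Rightarrow> ereal"
    and \<alpha>1 \<alpha>2 \<beta>1 \<beta>2 :: real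
  assumes "prob_space M" and "prob_space N"
    and "U1 \<in> borel_measurable M" and "U2 \<in> borel_measurable M"
    and "V1 \<in> borel_measurable N" and "V2 \<in> borel_measurable N"
    and "prob_space.indep_var M borel U1 borel U2"
    and "prob_space.indep_var N borel V1 borel V2"
    and "\<alpha>1 \<ge> 0" and "\<alpha>2 \<ge> 0"
    and "\<beta>1 \<in> {0..1}" and "\<beta>2 \<in> {0..1}"
    and "approx_dom N V1 M U1 \<alpha>1 \<beta>1"
    and "approx_dom N V2 M U2 \<alpha>2 \<beta>2"
  shows "approx_dom N (\<lambda>\<omega>. V1 \<omega> + V2 \<omega>) M (\<lambda>\<omega>. U1 \<omega> + U2 \<omega>) (\<alpha>1 + \<alpha>2) (\<beta>1 + \<beta>2)"
proof -
  note PM = assms(1) and PN = assms(2)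
  interpret M: prob_space M by fact
  interpret N: prob_space N by fact
  note mU1 = assms(3) and mU2 = assms(4) and mV1 = assms(5) and mV2 = assms(6)
  have b1: "\<beta>1 \<ge> 0" and b2: "\<beta>2 \<ge> 0" using assms(11,12) by auto
  define W1 where "W1 = (\<lambda>\<omega>. U1 \<omega> + ereal \<alpha>1)"
  define W2 where "W2 = (\<lambda>\<omega>. U2 \<omega> + ereal \<alpha>2)"
  have mW1: "W1 \<in> borel_measurable M" unfolding W1_def using mU1 by measurable
  have mW2: "W2 \<in> borel_measurable M" unfolding W2_def using mU2 by measurable
  define D1 where "D1 = distr N borel V1"
  define D2 where "D2 = distr N borel V2"
  define E1 where "E1 = distr M borel W1"
  define E2 where "E2 = distr M borel W2"
  have pD1: "prob_space D1" unfolding D1_def by (rule N.prob_space_distr[OF mV1])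
  have pD2: "prob_space D2" unfolding D2_def by (rule N.prob_space_distr[OF mV2])
  have pE1: "prob_space E1" unfolding E1_def by (rule M.prob_space_distr[OF mW1])
  have pE2: "prob_space E2" unfolding E2_def by (rule M.prob_space_distr[OF mW2])
  have dom_gen: "measure (distr N borel V) {y<..} \<le> measure (distr M borel (\<lambda>\<omega>. U \<omega> + ereal \<alpha>)) {y<..} + \<beta>"
    if mV: "V \<in> borel_measurable N" and mU: "U \<in> borel_measurable M" and ad: "approx_dom N V M U \<alpha> \<beta>" for V U \<alpha> \<beta> y
  proof -
    have mW: "(\<lambda>\<omega>. U \<omega> + ereal \<alpha>) \<in> borel_measurable M" using mU by measurable
    have "measure (distr N borel V) {y<..} = measure N {\<omega>\<in>space N. y < V \<omega>}"
      by (subst measure_distr[OF mV]) (auto intro!: arg_cong[where f="measure N"])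
    also have "\<dots> = ccdf_rv N V y" using ccdf_eq[OF PN mV] by simp
    also have "\<dots> \<le> ccdf_rv M U (y - ereal \<alpha>) + \<beta>" using ad by (simp add: approx_dom_def)
    also have "ccdf_rv M U (y - ereal \<alpha>) = measure M {\<omega>\<in>space M. y - ereal \<alpha> < U \<omega>}"
      using ccdf_eq[OF PM mU] by simp
    also have "\<dots> = measure (distr M borel (\<lambda>\<omega>. U \<omega> + ereal \<alpha>)) {y<..}"
      by (subst measure_distr[OF mW]) (auto simp: shift_iff intro!: arg_cong[where f="measure M"])
    finally show ?thesis .
  qed
  have dom1: "measure D1 {y<..} \<le> measure E1 {y<..} + \<beta>1" for y
    unfolding D1_def E1_def W1_def by (rule dom_gen[OF mV1 mU1 assms(13)])
  have dom2: "measure D2 {y<..} \<le> measure E2 {y<..} + \<beta>2" for y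
    unfolding D2_def E2_def W2_def by (rule dom_gen[OF mV2 mU2 assms(14)])
  have indW: "M.indep_var borel W1 borel W2"
    using M.indep_var_compose[OF assms(7), of "\<lambda>u. u + ereal \<alpha>1" borel "\<lambda>u. u + ereal \<alpha>2" borel]
    by (simp add: comp_def W1_def W2_def)
  have eqD: "D1 \<Otimes>\<^sub>M D2 = distr N (borel \<Otimes>\<^sub>M borel) (\<lambda>\<omega>. (V1 \<omega>, V2 \<omega>))"
    using assms(8) unfolding N.indep_var_distribution_eq D1_def D2_def by simp
  have eqE: "E1 \<Otimes>\<^sub>M E2 = distr M (borel \<Otimes>\<^sub>M borel) (\<lambda>\<omega>. (W1 \<omega>, W2 \<omega>))"
    using indW unfolding M.indep_var_distribution_eq E1_def E2_def by simp
  show ?thesis unfolding approx_dom_def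
  proof
    fix x :: ereal
    define A where "A = {p::ereal\<times>ereal. x < fst p + snd p}"
    have Ab: "A \<in> sets (borel \<Otimes>\<^sub>M borel)"
    proof -
      have "{p \<in> space (borel \<Otimes>\<^sub>M (borel::ereal measure)). x < fst p + snd p} \<in> sets (borel \<Otimes>\<^sub>M borel)"
        by measurable
      then show ?thesis by (simp add: space_pair_measure A_def)
    qed
    have key: "measure (D1 \<Otimes>\<^sub>M D2) A \<le> measure (E1 \<Otimes>\<^sub>M E2) A + \<beta>1 + \<beta>2"
      unfolding A_def
      by (rule pair_dom[OF pD1 pE1 _ _ dom1 b1 pD2 pE2 _ _ dom2 b2]) (simp_all add: D1_def D2_def E1_def E2_def)
    have mPV: "(\<lambda>\<omega>. (V1 \<omega>, V2 \<omega>)) \<in> measurable N (borel \<Otimes>\<^sub>M borel)" using mV1 mV2 by measurable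
    have mPW: "(\<lambda>\<omega>. (W1 \<omega>, W2 \<omega>)) \<in> measurable M (borel \<Otimes>\<^sub>M borel)" using mW1 mW2 by measurable
    have "ccdf_rv N (\<lambda>\<omega>. V1 \<omega> + V2 \<omega>) x = measure N {\<omega>\<in>space N. x < V1 \<omega> + V2 \<omega>}"
      using ccdf_eq[OF PN] mV1 mV2 by simp
    also have "\<dots> = measure (D1 \<Otimes>\<^sub>M D2) A"
      unfolding eqD by (subst measure_distr[OF mPV Ab]) (auto simp: A_def intro!: arg_cong[where f="measure N"])
    also have "\<dots> \<le> measure (E1 \<Otimes>\<^sub>M E2) A + \<beta>1 + \<beta>2" by (rule key)
    also have "measure (E1 \<Otimes>\<^sub>M E2) A = measure M {\<omega>\<in>space M. x < W1 \<omega> + W2 \<omega>}"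
      unfolding eqE by (subst measure_distr[OF mPW Ab]) (auto simp: A_def intro!: arg_cong[where f="measure M"])
    also have "\<dots> = measure M {\<omega>\<in>space M. x - ereal (\<alpha>1 + \<alpha>2) < U1 \<omega> + U2 \<omega>}"
    proof -
      have "W1 \<omega> + W2 \<omega> = (U1 \<omega> + U2 \<omega>) + ereal (\<alpha>1 + \<alpha>2)" for \<omega>
        by (simp only: W1_def W2_def plus_ereal.simps(1)[symmetric] ac_simps)
      then show ?thesis by (simp add: shift_iff)
    qed
    also have "\<dots> = ccdf_rv M (\<lambda>\<omega>. U1 \<omega> + U2 \<omega>) (x - ereal (\<alpha>1 + \<alpha>2))"
      using ccdf_eq[OF PM] mU1 mU2 by simp
    finally show "ccdf_rv N (\<lambda>\<omega>. V1 \<omega> + V2 \<omega>) x \<le> ccdf_rv M (\<lambda>\<omega>. U1 \<omega> + U2 \<omega>) (x - ereal (\<alpha>1 + \<alpha>2)) + (\<beta>1 + \<beta>2)"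
      by simp
  qed
qed

end
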